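(* Let $X=(X_1,\dots,X_d)$ be a random vector with values in $\{0,1\}^d$ such that $\mathbb{P}(X=x)>0$ for every $x\in\{0,1\}^d$, and let $G:\{0,1\}^d\to\mathbb{R}$. Let $X^{(1)},\dots,X^{(n)}$ be i.i.d. copies of $X$. Define $\boldsymbol g(x):=(e_A(x_A)G(x))_{A\subseteq D}\in\mathbb{R}^{2^d}$, $\boldsymbol\mu:=\mathbb{E}[\boldsymbol g(X)]$, $\widehat{\boldsymbol\mu}_n:=\frac1n\sum_{i=1}^n\boldsymbol g(X^{(i)})$, $\Gamma_{A,B}:=\mathbb{E}[e_A(X_A)e_B(X_B)]$, $\widehat{\boldsymbol\beta}_n:=\Gamma^{-1}\widehat{\boldsymbol\mu}_n$, $\boldsymbol e(x):=(e_A(x_A))_{A\subseteq D}$ and $\widehat G_n(x):=\widehat{\boldsymbol\beta}_n^{\top}\boldsymbol e(x)$. Let $\|\boldsymbol g-\boldsymbol\mu\|_\infty:=\sup_{x\in\{0,1\}^d}\|\boldsymbol g(x)-\boldsymbol\mu\|_2$ and let $\lambda_{\min}(\Gamma)$ be the smallest eigenvalue of $\Gamma$. Then for every $x\in\{0,1\}^d$ and every $\varepsilon$ with $0\le\varepsilon\le\dfrac{\|\boldsymbol g-\boldsymbol\mu\|_\infty\|\boldsymbol e(x)\|_2}{\lambda_{\min}(\Gamma)}$, $$\mathbb{P}\left(|\widehat G_n(x)-G(x)|>\varepsilon\right)\le\exp\left(-\frac n8\left(\frac{\varepsilon\,\lambda_{\min}(\Gamma)}{\|\boldsymbol g-\boldsymbol\mu\|_\infty\|\boldsymbol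 e(x)\|_2}\right)^2+\frac14\right).$$
   Context: $D=\{1,\dots,d\}$; for $A\subseteq D$, $x_A:=(x_i)_{i\in A}$, $\mathbf{P}_A(x_A):=\mathbb{P}(X_A=x_A)$, and $e_A(x_A):=\dfrac{(-1)^{\sum_{j\in A}x_j}}{\mathbf{P}_A(x_A)}$ with $e_\emptyset\equiv1$. The matrix $\Gamma=(\Gamma_{A,B})_{A,B\subseteq D}$ is symmetric positive definite. *)

theory Defs
  imports "HOL-Probability.Probability"
begin

text \<open>Coordinates D are the elements of a finite type 'd (so d = CARD('d)).
  A point x of {0,1}^d is a function 'd => nat with values in {0,1}.\<close>

definition bin01 :: "('d \<Rightarrow> nat) set" where
  "bin01 = {x. \<forall>j. x j \<in> {0, 1}}"

definition margP :: "'a measure \<Rightarrow> ('a \<Rightarrow> 'd \<Rightarrow> nat) \<Rightarrow> 'd set \<Rightarrow> ('d \<Rightarrow> nat) \<Rightarrow> real" where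
  "margP M X A x = measure M {\<omega> \<in> space M. \<forall>j\<in>A. X \<omega> j = x j}"

definition eA :: "'a measure \<Rightarrow> ('a \<Rightarrow> 'd \<Rightarrow> nat) \<Rightarrow> 'd set \<Rightarrow> ('d \<Rightarrow> nat) \<Rightarrow> real" where
  "eA M X A x = (-1) ^ (\<Sum>j\<in>A. x j) / margP M X A x"

definition evec :: "'a measure \<Rightarrow> ('a \<Rightarrow> 'd::finite \<Rightarrow> nat) \<Rightarrow> ('d \<Rightarrow> nat) \<Rightarrow> real ^ ('d set)" where
  "evec M X x = (\<chi> A. eA M X A x)"

definition gvec :: "'a measure \<Rightarrow> ('a \<Rightarrow> 'd::finite \<Rightarrow> nat) \<Rightarrow> (('d \<Rightarrow> nat) \<Rightarrow> real)
    \<Rightarrow> ('d \<Rightarrow> nat) \<Rightarrow> real ^ ('d set)" where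
  "gvec M X G x = (\<chi> A. eA M X A x * G x)"

definition muvec :: "'a measure \<Rightarrow> ('a \<Rightarrow> 'd::finite \<Rightarrow> nat) \<Rightarrow> (('d \<Rightarrow> nat) \<Rightarrow> real)
    \<Rightarrow> real ^ ('d set)" where
  "muvec M X G = integral\<^sup>L M (\<lambda>\<omega>. gvec M X G (X \<omega>))"

definition Gamma :: "'a measure \<Rightarrow> ('a \<Rightarrow> 'd::finite \<Rightarrow> nat) \<Rightarrow> real ^ ('d set) ^ ('d set)" where
  "Gamma M X = (\<chi> A B. integral\<^sup>L M (\<lambda>\<omega>. eA M X A (X \<omega>) * eA M X B (X \<omega>)))"

definition lambda_min :: "real ^ 'n ^ 'n \<Rightarrow> real" where
  "lambda_min S = Min {l. \<exists>v. v \<noteq> 0 \<and> S *v v = l *\<^sub>R v}"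

definition gsupnorm :: "'a measure \<Rightarrow> ('a \<Rightarrow> 'd::finite \<Rightarrow> nat) \<Rightarrow> (('d \<Rightarrow> nat) \<Rightarrow> real) \<Rightarrow> real" where
  "gsupnorm M X G = (SUP y\<in>bin01. norm (gvec M X G y - muvec M X G))"

definition Ghat :: "'a measure \<Rightarrow> ('a \<Rightarrow> 'd::finite \<Rightarrow> nat) \<Rightarrow> (('d \<Rightarrow> nat) \<Rightarrow> real)
    \<Rightarrow> nat \<Rightarrow> (nat \<Rightarrow> 'a \<Rightarrow> 'd \<Rightarrow> nat) \<Rightarrow> ('d \<Rightarrow> nat) \<Rightarrow> 'a \<Rightarrow> real" where
  "Ghat M X G n Xs x \<omega> =
     (matrix_inv (Gamma M X) *v ((1 / real n) *\<^sub>R (\<Sum>i = 1..n. gvec M X G (Xs i \<omega>)))) \<bullet> evec M X x"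

end

theory Submission
  imports Defs
begin


lemma cosh_bound_nonneg:
  fixes R :: real assumes "R \<ge> 0"
  shows "(exp R + exp (-R)) / 2 \<le> exp (R^2/2)"
proof -
  have h0: "-(2*R) * (1/2) + ln (1 + (1/2) * (exp (2*R) - 1)) \<le> (2*R)^2/8"
    using Hoeffdings_lemma_aux[of "2*R" "1/2"] assms by simp
  have e1: "(2*R)^2/8 = R^2/2" by (simp add: power2_eq_square)
  have e2: "1 + (1/2) * (exp (2*R) - 1) = (1 + exp (2*R))/2" by (simp add: field_simps)
  have "ln ((1 + exp (2*R))/2) \<le> R + R^2/2"
    using h0 unfolding e1 e2 by linarith
  hence "(1 + exp (2*R))/2 \<le> exp (R + R^2/2)"
    by (metis add_pos_pos divide_pos_pos exp_gt_zero exp_le_cancel_iff exp_ln zero_less_one zero_less_numeral)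
  hence "(1 + exp (2*R))/2 * exp (-R) \<le> exp (R + R^2/2) * exp (-R)"
    by simp
  moreover have "(1 + exp (2*R))/2 * exp (-R) = (exp R + exp (-R)) / 2"
    by (simp add: field_simps flip: exp_add)
  moreover have "exp (R + R^2/2) * exp (-R) = exp (R^2/2)"
    by (simp flip: exp_add)
  ultimately show ?thesis by simp
qed

lemma cosh_bound:
  fixes R :: real
  shows "(exp R + exp (-R)) / 2 \<le> exp (R^2/2)"
proof (cases "R \<ge> 0")
  case True then show ?thesis by (rule cosh_bound_nonneg)
next
  case False
  then show ?thesis using cosh_bound_nonneg[of "-R"] by (simp add: add.commute)
qed

lemma exp_chord:
  fixes R w :: real assumes "R > 0" "\<bar>w\<bar> \<le> R"
  shows "exp w \<le> ((R - w) * exp (-R) + (R + w) * exp R) / (2*R)"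
proof -
  define th where "th = (w + R) / (2*R)"
  have th: "0 \<le> th" "th \<le> 1" using assms by (auto simp: th_def field_simps)
  have w: "w = (1 - th) * (-R) + th * R" using assms by (simp add: th_def field_simps)
  have "exp ((1 - th) * (-R) + th * R) \<le> (1 - th) * exp (-R) + th * exp R"
    using convex_onD[OF convex_on_exp[of 1], of th "-R" R] th by simp
  also have "\<dots> = ((R - w) * exp (-R) + (R + w) * exp R) / (2*R)"
    using assms by (simp add: th_def field_simps)
  finally show ?thesis using w by simp
qed

lemma hoeff_fin:
  fixes q W :: "'b \<Rightarrow> real"
  assumes B: "finite B" and q: "\<And>a. a \<in> B \<Longrightarrow> q a \<ge> 0" and s1: "sum q B = 1"
    and m0: "(\<Sum>a\<in>B. q a * W a) = 0" and bd: "\<And>a. a \<in> B \<Longrightarrow> \<bar>W a\<bar> \<le> R"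
  shows "(\<Sum>a\<in>B. q a * exp (W a)) \<le> exp (R^2/2)"
proof -
  have "B \<noteq> {}" using s1 by auto
  then obtain a0 where "a0 \<in> B" by auto
  hence R0: "R \<ge> 0" using bd[of a0] by auto
  show ?thesis
  proof (cases "R = 0")
    case True
    hence "\<And>a. a \<in> B \<Longrightarrow> W a = 0" using bd by fastforce
    hence "(\<Sum>a\<in>B. q a * exp (W a)) = sum q B" by simp
    then show ?thesis using s1 True by simp
  next
    case False
    hence Rp: "R > 0" using R0 by simp
    have "(\<Sum>a\<in>B. q a * exp (W a)) \<le> (\<Sum>a\<in>B. q a * (((R - W a) * exp (-R) + (R + W a) * exp R) / (2*R)))"
      by (intro sum_mono mult_left_mono exp_chord Rp bd q)
    also have "\<dots> = (\<Sum>a\<in>B. (q a * ((exp (-R) + exp R) / 2) + (q a * W a) * ((exp R - exp (-R)) / (2*R))))"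
      using Rp by (intro sum.cong refl) (simp add: field_simps)
    also have "\<dots> = sum q B * ((exp (-R) + exp R) / 2) + (\<Sum>a\<in>B. q a * W a) * ((exp R - exp (-R)) / (2*R))"
      by (simp only: sum.distrib sum_distrib_right)
    also have "\<dots> = (exp R + exp (-R)) / 2" using s1 m0 by simp
    also have "\<dots> \<le> exp (R^2/2)" by (rule cosh_bound)
    finally show ?thesis .
  qed
qed

lemma step_fin:
  fixes q :: "'b \<Rightarrow> real" and Z :: "'b \<Rightarrow> 'v::real_inner"
  assumes B: "finite B" and q: "\<And>a. a \<in> B \<Longrightarrow> q a \<ge> 0" and s1: "sum q B = 1"
    and m0: "(\<Sum>a\<in>B. q a *\<^sub>R Z a) = 0" and bd: "\<And>a. a \<in> B \<Longrightarrow> norm (Z a) \<le> 1"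
    and al: "al \<ge> 0"
  shows "(\<Sum>b\<in>B. q b * exp (al * (norm (s + Z b))^2)) \<le> exp al * exp ((al + 2*al^2) * (norm s)^2)"
proof -
  define W where "W b = 2 * al * (s \<bullet> Z b)" for b
  have pt: "q b * exp (al * (norm (s + Z b))^2) \<le> q b * (exp (al + al * (norm s)^2) * exp (W b))"
    if b: "b \<in> B" for b
  proof -
    have "(norm (s + Z b))^2 = (norm s)^2 + 2 * (s \<bullet> Z b) + (norm (Z b))^2"
      by (simp add: power2_norm_eq_inner inner_add inner_commute)
    moreover have "(norm (Z b))^2 \<le> 1" using bd[OF b] by (simp add: power_le_one)
    ultimately have "al * (norm (s + Z b))^2 \<le> al + al * (norm s)^2 + W b"
      using al by (simp add: W_def algebra_simps) (metis mult_left_le mult.commute)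
    hence "exp (al * (norm (s + Z b))^2) \<le> exp (al + al * (norm s)^2) * exp (W b)"
      by (simp flip: exp_add)
    thus ?thesis using q[OF b] by (rule mult_left_mono)
  qed
  have "(\<Sum>b\<in>B. q b * exp (al * (norm (s + Z b))^2)) \<le> (\<Sum>b\<in>B. q b * (exp (al + al * (norm s)^2) * exp (W b)))"
    by (rule sum_mono) (rule pt)
  also have "\<dots> = exp (al + al * (norm s)^2) * (\<Sum>b\<in>B. q b * exp (W b))"
    unfolding sum_distrib_left by (intro sum.cong refl) (simp add: algebra_simps)
  also have "\<dots> \<le> exp (al + al * (norm s)^2) * exp ((2 * al * norm s)^2/2)"
  proof (rule mult_left_mono[OF hoeff_fin[OF B q s1]])
    have "(\<Sum>a\<in>B. q a * W a) = 2 * al * (s \<bullet> (\<Sum>a\<in>B. q a *\<^sub>R Z a))"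
      by (simp add: W_def inner_sum_right sum_distrib_left algebra_simps)
    thus "(\<Sum>a\<in>B. q a * W a) = 0" using m0 by simp
    show "\<bar>W a\<bar> \<le> 2 * al * norm s" if "a \<in> B" for a
    proof -
      have "\<bar>s \<bullet> Z a\<bar> \<le> norm s * norm (Z a)" by (rule Cauchy_Schwarz_ineq2)
      also have "\<dots> \<le> norm s" using bd[OF that] by (simp add: mult_left_le)
      finally have "2*al*\<bar>s \<bullet> Z a\<bar> \<le> 2*al*norm s" using al by (intro mult_left_mono) auto
      thus ?thesis using al by (simp add: W_def abs_mult)
    qed
  qed auto
  also have "\<dots> = exp al * exp ((al + 2*al^2) * (norm s)^2)"
    by (simp add: power2_eq_square algebra_simps flip: exp_add)
  finally show ?thesis .
qed

lemma sum_PiE_insert: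
  assumes "k \<notin> A" "finite A" "\<And>i. finite (C i)"
  shows "(\<Sum>y\<in>PiE (insert k A) C. F y) = (\<Sum>b\<in>C k. \<Sum>y\<in>PiE A C. F (y(k:=b)))"
proof -
  have "(\<Sum>y\<in>PiE (insert k A) C. F y) = (\<Sum>p\<in>C k \<times> PiE A C. F ((\<lambda>(b, g). g(k := b)) p))"
    unfolding PiE_insert_eq by (rule sum.reindex[OF inj_combinator[OF assms(1)], unfolded comp_def])
  also have "\<dots> = (\<Sum>b\<in>C k. \<Sum>y\<in>PiE A C. F (y(k:=b)))"
    by (simp add: sum.cartesian_product split_def)
  finally show ?thesis .
qed

definition Tsum :: "('b \<Rightarrow> 'v::real_inner) \<Rightarrow> nat \<Rightarrow> (nat \<Rightarrow> 'b) \<Rightarrow> 'v" where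
  "Tsum Z k y = (\<Sum>i\<in>{1..k}. Z (y i))"

definition Vsum :: "'b set \<Rightarrow> ('b \<Rightarrow> real) \<Rightarrow> ('b \<Rightarrow> 'v::real_inner) \<Rightarrow> nat \<Rightarrow> real \<Rightarrow> real" where
  "Vsum B q Z k al = (\<Sum>y\<in>PiE {1..k} (\<lambda>_. B). (\<Prod>i\<in>{1..k}. q (y i)) * exp (al * (norm (Tsum Z k y))^2))"

lemma prod_q_nonneg:
  assumes "\<And>a. a \<in> B \<Longrightarrow> (q a :: real) \<ge> 0" "y \<in> PiE {1..k} (\<lambda>_. B)"
  shows "(\<Prod>i\<in>{1..k}. q (y i)) \<ge> 0"
  using assms by (intro prod_nonneg) (auto simp: PiE_iff)

lemma Vsum_mono:
  assumes "\<And>a. a \<in> B \<Longrightarrow> (q a :: real) \<ge> 0" "al \<le> al'"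
  shows "Vsum B q Z k al \<le> Vsum B q Z k al'"
  unfolding Vsum_def
  by (intro sum_mono mult_left_mono prod_q_nonneg[OF assms(1)]) (auto intro: mult_right_mono assms(2))

lemma Vsum_step:
  fixes q :: "'b \<Rightarrow> real" and Z :: "'b \<Rightarrow> 'v::real_inner"
  assumes B: "finite B" and q: "\<And>a. a \<in> B \<Longrightarrow> q a \<ge> 0" and s1: "sum q B = 1"
    and m0: "(\<Sum>a\<in>B. q a *\<^sub>R Z a) = 0" and bd: "\<And>a. a \<in> B \<Longrightarrow> norm (Z a) \<le> 1"
    and al: "al \<ge> 0"
  shows "Vsum B q Z (Suc k) al \<le> exp al * Vsum B q Z k (al + 2*al^2)"
proof -
  have ins: "{1..Suc k} = insert (Suc k) {1..k}" by auto
  have nk: "Suc k \<notin> {1..k}" by simp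
  have "Vsum B q Z (Suc k) al = (\<Sum>b\<in>B. \<Sum>y\<in>PiE {1..k} (\<lambda>_. B).
          (\<Prod>i\<in>insert (Suc k) {1..k}. q ((y(Suc k := b)) i)) *
          exp (al * (norm (\<Sum>i\<in>insert (Suc k) {1..k}. Z ((y(Suc k := b)) i)))^2))"
    unfolding Vsum_def Tsum_def ins using B by (subst sum_PiE_insert) auto
  also have "\<dots> = (\<Sum>b\<in>B. \<Sum>y\<in>PiE {1..k} (\<lambda>_. B).
          (\<Prod>i\<in>{1..k}. q (y i)) * (q b * exp (al * (norm (Tsum Z k y + Z b))^2)))"
  proof (intro sum.cong refl)
    fix b y
    have p: "(\<Prod>i\<in>{1..k}. q ((y(Suc k := b)) i)) = (\<Prod>i\<in>{1..k}. q (y i))"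
      by (intro prod.cong) auto
    have s: "(\<Sum>i\<in>{1..k}. Z ((y(Suc k := b)) i)) = Tsum Z k y"
      unfolding Tsum_def by (intro sum.cong) auto
    show "(\<Prod>i\<in>insert (Suc k) {1..k}. q ((y(Suc k := b)) i)) *
          exp (al * (norm (\<Sum>i\<in>insert (Suc k) {1..k}. Z ((y(Suc k := b)) i)))^2) =
          (\<Prod>i\<in>{1..k}. q (y i)) * (q b * exp (al * (norm (Tsum Z k y + Z b))^2))"
      by (simp only: prod.insert[OF finite_atLeastAtMost nk] sum.insert[OF finite_atLeastAtMost nk] p s fun_upd_same)
         (simp add: add.commute mult.left_commute)
  qed
  also have "\<dots> = (\<Sum>y\<in>PiE {1..k} (\<lambda>_. B). (\<Prod>i\<in>{1..k}. q (y i)) *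
          (\<Sum>b\<in>B. q b * exp (al * (norm (Tsum Z k y + Z b))^2)))"
    by (subst sum.swap) (simp add: sum_distrib_left)
  also have "\<dots> \<le> (\<Sum>y\<in>PiE {1..k} (\<lambda>_. B). (\<Prod>i\<in>{1..k}. q (y i)) *
          (exp al * exp ((al + 2*al^2) * (norm (Tsum Z k y))^2)))"
    by (intro sum_mono mult_left_mono step_fin[OF B q s1 m0 bd al] prod_q_nonneg[OF q]) auto
  also have "\<dots> = exp al * Vsum B q Z k (al + 2*al^2)"
    unfolding Vsum_def by (simp add: sum_distrib_left algebra_simps)
  finally show ?thesis .
qed

lemma Vsum_bound:
  fixes n k :: nat and q :: "'b \<Rightarrow> real" and Z :: "'b \<Rightarrow> 'v::real_inner"
  assumes B: "finite B" and q: "\<And>a. a \<in> B \<Longrightarrow> q a \<ge> 0" and s1: "sum q B = 1"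
    and m0: "(\<Sum>a\<in>B. q a *\<^sub>R Z a) = 0" and bd: "\<And>a. a \<in> B \<Longrightarrow> norm (Z a) \<le> 1"
    and n: "n \<ge> 1"
  shows "k \<le> n \<Longrightarrow> Vsum B q Z k (1 / (6*real n + 2*real k)) \<le> exp (real k / (6*real n))"
proof (induction k)
  case 0
  then show ?case by (simp add: Vsum_def Tsum_def)
next
  case (Suc k)
  define al where "al = 1 / (6*real n + 2*real (Suc k))"
  have al0: "al \<ge> 0" by (simp add: al_def)
  have al1: "al \<le> 1 / (6*real n)" using n unfolding al_def by (intro divide_left_mono) auto
  have al2: "al + 2*al^2 \<le> 1 / (6*real n + 2*real k)"
  proof -
    define E where "E = 6*real n + 2*real (Suc k)"
    have E: "E \<ge> 8" using n by (simp add: E_def)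
    have "al = 1/E" by (simp add: al_def E_def)
    hence "al + 2*al^2 = 1/E + 2*(1/E)^2" by simp
    also have "\<dots> = (E + 2) / E^2" using E by (simp add: power2_eq_square field_simps)
    also have "\<dots> \<le> 1 / (E - 2)" using E by (simp add: field_simps power2_eq_square)
    also have "E - 2 = 6*real n + 2*real k" by (simp add: E_def)
    finally show ?thesis .
  qed
  have "Vsum B q Z (Suc k) al \<le> exp al * Vsum B q Z k (al + 2*al^2)"
    by (rule Vsum_step[OF B q s1 m0 bd al0])
  also have "\<dots> \<le> exp al * Vsum B q Z k (1 / (6*real n + 2*real k))"
    by (intro mult_left_mono Vsum_mono[OF q al2]) auto
  also have "\<dots> \<le> exp (1 / (6*real n)) * exp (real k / (6*real n))"
    using Suc al1 by (intro mult_mono) (auto simp: Vsum_def PiE_iff intro!: sum_nonneg mult_nonneg_nonneg prod_nonneg q)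
  also have "\<dots> = exp (real (Suc k) / (6*real n))" by (simp add: add_divide_distrib flip: exp_add)
  finally show ?case unfolding al_def .
qed

lemma tail_fin:
  fixes n :: nat and t :: real and q :: "'b \<Rightarrow> real" and Z :: "'b \<Rightarrow> 'v::real_inner"
  assumes B: "finite B" and q: "\<And>a. a \<in> B \<Longrightarrow> q a \<ge> 0" and s1: "sum q B = 1"
    and m0: "(\<Sum>a\<in>B. q a *\<^sub>R Z a) = 0" and bd: "\<And>a. a \<in> B \<Longrightarrow> norm (Z a) \<le> 1"
    and n: "n \<ge> 1" and t: "t \<ge> 0"
  shows "(\<Sum>y\<in>{y\<in>PiE {1..n} (\<lambda>_. B). norm (Tsum Z n y) > n * t}. \<Prod>i\<in>{1..n}. q (y i))
         \<le> exp (1/6 - n * t^2 / 8)"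
proof -
  define al where "al = 1 / (8 * real n)"
  have al0: "al \<ge> 0" by (simp add: al_def)
  have fin: "finite (PiE {1..n} (\<lambda>_. B))" using B by (simp add: finite_PiE)
  have "(\<Sum>y\<in>{y\<in>PiE {1..n} (\<lambda>_. B). norm (Tsum Z n y) > n * t}. \<Prod>i\<in>{1..n}. q (y i))
     \<le> (\<Sum>y\<in>{y\<in>PiE {1..n} (\<lambda>_. B). norm (Tsum Z n y) > n * t}.
          (\<Prod>i\<in>{1..n}. q (y i)) * exp (al * ((norm (Tsum Z n y))^2 - (n*t)^2)))"
  proof (intro sum_mono)
    fix y assume y: "y \<in> {y\<in>PiE {1..n} (\<lambda>_. B). norm (Tsum Z n y) > n * t}"
    have "(n*t)^2 \<le> (norm (Tsum Z n y))^2" using y t by (intro power_mono) auto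
    hence e1: "1 \<le> exp (al * ((norm (Tsum Z n y))^2 - (n*t)^2))" using al0 by simp
    thus "(\<Prod>i\<in>{1..n}. q (y i)) \<le> (\<Prod>i\<in>{1..n}. q (y i)) * exp (al * ((norm (Tsum Z n y))^2 - (n*t)^2))"
    proof -
      have pq: "(\<Prod>i\<in>{1..n}. q (y i)) \<ge> 0" using y by (intro prod_nonneg) (auto simp: PiE_iff intro: q)
      show ?thesis using mult_left_mono[OF e1 pq] by simp
    qed
  qed
  also have "\<dots> \<le> (\<Sum>y\<in>PiE {1..n} (\<lambda>_. B).
          (\<Prod>i\<in>{1..n}. q (y i)) * exp (al * ((norm (Tsum Z n y))^2 - (n*t)^2)))"
    apply (rule sum_mono2[OF fin])
     apply blast
    apply (auto intro!: mult_nonneg_nonneg prod_nonneg q dest: PiE_mem)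
    done
  also have "\<dots> = exp (- al * (n*t)^2) * Vsum B q Z n al"
    unfolding Vsum_def sum_distrib_left
    by (intro sum.cong refl) (simp add: algebra_simps flip: exp_add)
  also have "\<dots> \<le> exp (- al * (n*t)^2) * exp (n / (6*n))"
    using Vsum_bound[OF B q s1 m0 bd n, of n] by (simp add: al_def)
  also have "\<dots> = exp (1/6 - n * t^2 / 8)"
    using n by (simp add: al_def power2_eq_square field_simps flip: exp_add)
  finally show ?thesis .
qed



lemma bin01_PiE: "bin01 = PiE UNIV (\<lambda>_::'d. {0, 1::nat})"
  by (rule set_eqI) (simp add: bin01_def PiE_iff)

lemma finite_bin01: "finite (bin01 :: ('d::finite \<Rightarrow> nat) set)"
  unfolding bin01_PiE by (rule finite_PiE) auto

lemma X_in_bin01: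
  assumes "X \<in> measurable M (count_space bin01)" "\<omega> \<in> space M"
  shows "X \<omega> \<in> bin01"
  using measurable_space[OF assms] by simp

lemma X_eq_sets:
  assumes "X \<in> measurable M (count_space (B::'b set))" "a \<in> B"
  shows "{\<omega> \<in> space M. X \<omega> = a} \<in> sets M"
proof -
  have "{\<omega> \<in> space M. X \<omega> = a} = X -` {a} \<inter> space M" by auto
  also have "\<dots> \<in> sets M" using assms by (intro measurable_sets[OF assms(1)]) auto
  finally show ?thesis .
qed

lemma exp_trans:
  fixes f :: "('d::finite \<Rightarrow> nat) \<Rightarrow> 'b::{banach,second_countable_topology}"
  assumes P: "prob_space M" and X: "X \<in> measurable M (count_space bin01)"
  shows "integral\<^sup>L M (\<lambda>\<omega>. f (X \<omega>)) = (\<Sum>a\<in>bin01. measure M {\<omega>\<in>space M. X \<omega> = a} *\<^sub>R f a)"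
proof -
  interpret prob_space M by (rule P)
  have emf: "emeasure M A < \<top>" for A
    using finite_measure.emeasure_finite[OF finite_measure_axioms, of A] using top.not_eq_extremum by blast
  have eq: "f (X \<omega>) = (\<Sum>a\<in>bin01. indicator {\<omega>\<in>space M. X \<omega> = a} \<omega> *\<^sub>R f a)"
    if w: "\<omega> \<in> space M" for \<omega>
  proof -
    have "(\<Sum>a\<in>bin01. indicator {\<omega>\<in>space M. X \<omega> = a} \<omega> *\<^sub>R f a) = (\<Sum>a\<in>bin01. if a = X \<omega> then f a else 0)"
      using w by (intro sum.cong refl) (auto simp: indicator_def)
    also have "\<dots> = f (X \<omega>)" using X_in_bin01[OF X w] by (subst sum.delta[OF finite_bin01]) simp
    finally show ?thesis by simp
  qed
  have "integral\<^sup>L M (\<lambda>\<omega>. f (X \<omega>)) = integral\<^sup>L M (\<lambda>\<omega>. \<Sum>a\<in>bin01. indicator {\<omega>\<in>space M. X \<omega> = a} \<omega> *\<^sub>R f a)"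
    by (rule Bochner_Integration.integral_cong[OF refl]) (rule eq)
  also have "\<dots> = (\<Sum>a\<in>bin01. integral\<^sup>L M (\<lambda>\<omega>. indicator {\<omega>\<in>space M. X \<omega> = a} \<omega> *\<^sub>R f a))"
    by (intro Bochner_Integration.integral_sum Bochner_Integration.integrable_scaleR_left integrable_real_indicator X_eq_sets[OF X])
       (auto simp: emf)
  also have "\<dots> = (\<Sum>a\<in>bin01. measure M {\<omega>\<in>space M. X \<omega> = a} *\<^sub>R f a)"
  proof (intro sum.cong refl)
    fix a :: "'d \<Rightarrow> nat" assume a: "a \<in> bin01"
    have "integral\<^sup>L M (\<lambda>\<omega>. indicator {\<omega>\<in>space M. X \<omega> = a} \<omega> *\<^sub>R f a)
        = integral\<^sup>L M (indicator {\<omega>\<in>space M. X \<omega> = a} :: _ \<Rightarrow> real) *\<^sub>R f a"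
      by (intro Bochner_Integration.integral_scaleR_left integrable_real_indicator X_eq_sets[OF X a]) (auto simp: emf)
    also have "\<dots> = measure M {\<omega>\<in>space M. X \<omega> = a} *\<^sub>R f a"
      by (simp add: Int_absorb2 subset_iff)
    finally show "integral\<^sup>L M (\<lambda>\<omega>. indicator {\<omega>\<in>space M. X \<omega> = a} \<omega> *\<^sub>R f a) =
        measure M {\<omega>\<in>space M. X \<omega> = a} *\<^sub>R f a" .
  qed
  finally show ?thesis .
qed

lemma prob_trans:
  fixes X :: "'a \<Rightarrow> ('d::finite \<Rightarrow> nat)" and Xs :: "nat \<Rightarrow> 'a \<Rightarrow> ('d \<Rightarrow> nat)"
  assumes P: "prob_space M" and X: "X \<in> measurable M (count_space bin01)"
    and Xs_rv: "\<And>i. i \<in> {1..n} \<Longrightarrow> Xs i \<in> measurable M (count_space bin01)"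
    and Xs_indep: "prob_space.indep_vars M (\<lambda>_. count_space bin01) Xs {1..n}"
    and Xs_ident: "\<And>i. i \<in> {1..n} \<Longrightarrow>
                     distr M (count_space bin01) (Xs i) = distr M (count_space bin01) X"
    and n: "n \<ge> 1" and E: "E \<subseteq> PiE {1..n} (\<lambda>_. bin01)"
  shows "{\<omega>\<in>space M. (\<lambda>i\<in>{1..n}. Xs i \<omega>) \<in> E} \<in> sets M \<and>
    measure M {\<omega>\<in>space M. (\<lambda>i\<in>{1..n}. Xs i \<omega>) \<in> E}
       = (\<Sum>y\<in>E. \<Prod>i\<in>{1..n}. measure M {\<omega>\<in>space M. X \<omega> = y i})"
proof -
  interpret prob_space M by (rule P)
  have finE: "finite E" using E finite_subset[OF E] finite_PiE[of "{1..n}" "\<lambda>_. bin01"] finite_bin01 by auto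
  define A where "A y = (\<Inter>i\<in>{1..n}. Xs i -` {y i} \<inter> space M)" for y :: "nat \<Rightarrow> 'd \<Rightarrow> nat"
  have ne: "{1..n} \<noteq> {}" using n by auto
  have Aeq: "{\<omega>\<in>space M. (\<lambda>i\<in>{1..n}. Xs i \<omega>) = y} = A y" if y: "y \<in> E" for y
  proof -
    have ext: "y \<in> extensional {1..n}" using E y by (auto simp: PiE_def)
    show ?thesis
    proof (intro set_eqI iffI)
      fix \<omega> assume "\<omega> \<in> {\<omega>\<in>space M. (\<lambda>i\<in>{1..n}. Xs i \<omega>) = y}"
      then show "\<omega> \<in> A y" unfolding A_def by (auto dest: fun_cong)
    next
      fix \<omega> assume w: "\<omega> \<in> A y"
      hence "\<omega> \<in> space M" using ne unfolding A_def by auto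
      moreover have "(\<lambda>i\<in>{1..n}. Xs i \<omega>) = y"
        using w ext by (auto simp: A_def extensional_def fun_eq_iff)
      ultimately show "\<omega> \<in> {\<omega>\<in>space M. (\<lambda>i\<in>{1..n}. Xs i \<omega>) = y}" by simp
    qed
  qed
  have Asets: "A y \<in> sets M" if "y \<in> E" for y
    unfolding A_def using ne that E
    by (intro sets.finite_INT) (auto intro!: measurable_sets[OF Xs_rv] simp: PiE_iff)
  have "{\<omega>\<in>space M. (\<lambda>i\<in>{1..n}. Xs i \<omega>) \<in> E} = (\<Union>y\<in>E. A y)"
  proof (intro set_eqI iffI)
    fix \<omega> assume w: "\<omega> \<in> {\<omega>\<in>space M. (\<lambda>i\<in>{1..n}. Xs i \<omega>) \<in> E}"
    then have "\<omega> \<in> A (\<lambda>i\<in>{1..n}. Xs i \<omega>)" using Aeq[of "\<lambda>i\<in>{1..n}. Xs i \<omega>"] by blast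
    then show "\<omega> \<in> (\<Union>y\<in>E. A y)" using w by blast
  next
    fix \<omega> assume "\<omega> \<in> (\<Union>y\<in>E. A y)"
    then obtain y where y: "y \<in> E" "\<omega> \<in> A y" by blast
    then have "\<omega> \<in> {\<omega>\<in>space M. (\<lambda>i\<in>{1..n}. Xs i \<omega>) = y}" using Aeq[OF y(1)] by simp
    then show "\<omega> \<in> {\<omega>\<in>space M. (\<lambda>i\<in>{1..n}. Xs i \<omega>) \<in> E}" using y(1) by simp
  qed
  have Ueq: "{\<omega>\<in>space M. (\<lambda>i\<in>{1..n}. Xs i \<omega>) \<in> E} = (\<Union>y\<in>E. A y)" by fact
  have SS: "{\<omega>\<in>space M. (\<lambda>i\<in>{1..n}. Xs i \<omega>) \<in> E} \<in> sets M"
    unfolding Ueq using Asets finE by (intro sets.finite_UN) auto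
  from Ueq have "measure M {\<omega>\<in>space M. (\<lambda>i\<in>{1..n}. Xs i \<omega>) \<in> E} = (\<Sum>y\<in>E. measure M (A y))"
  proof (simp only:, intro measure_finite_Union finE)
    show "A ` E \<subseteq> sets M" using Asets by auto
    show "disjoint_family_on A E"
      unfolding disjoint_family_on_def
    proof (intro ballI impI)
      fix y y' assume yy: "y \<in> E" "y' \<in> E" "y \<noteq> y'"
      show "A y \<inter> A y' = {}"
        using Aeq[OF yy(1), symmetric] Aeq[OF yy(2), symmetric] yy(3) by auto
    qed
  qed (simp add: finite_measure.emeasure_finite[OF finite_measure_axioms])
  also have "\<dots> = (\<Sum>y\<in>E. \<Prod>i\<in>{1..n}. measure M {\<omega>\<in>space M. X \<omega> = y i})"
  proof (intro sum.cong refl)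
    fix y assume y: "y \<in> E"
    have yi: "y i \<in> bin01" if "i \<in> {1..n}" for i using y E that by (auto simp: PiE_iff)
    have "measure M (A y) = (\<Prod>i\<in>{1..n}. prob (Xs i -` {y i} \<inter> space M))"
      unfolding A_def using yi by (intro indep_varsD_finite[OF Xs_indep ne]) auto
    also have "\<dots> = (\<Prod>i\<in>{1..n}. measure M {\<omega>\<in>space M. X \<omega> = y i})"
    proof (intro prod.cong refl)
      fix i assume i: "i \<in> {1..n}"
      have "prob (Xs i -` {y i} \<inter> space M) = measure (distr M (count_space bin01) (Xs i)) {y i}"
        using yi[OF i] by (subst measure_distr[OF Xs_rv[OF i]]) auto
      also have "\<dots> = measure (distr M (count_space bin01) X) {y i}" using Xs_ident[OF i] by simp
      also have "\<dots> = measure M (X -` {y i} \<inter> space M)"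
        using yi[OF i] by (subst measure_distr[OF X]) auto
      also have "X -` {y i} \<inter> space M = {\<omega>\<in>space M. X \<omega> = y i}" by auto
      finally show "prob (Xs i -` {y i} \<inter> space M) = measure M {\<omega>\<in>space M. X \<omega> = y i}" .
    qed
    finally show "measure M (A y) = (\<Prod>i\<in>{1..n}. measure M {\<omega>\<in>space M. X \<omega> = y i})" .
  qed
  finally show ?thesis using SS by blast
qed



lemma sym_inner:
  fixes S :: "real^'n^'n" assumes sym: "transpose S = S"
  shows "(S *v u) \<bullet> w = u \<bullet> (S *v w)"
proof -
  have "(S *v u) \<bullet> w = (u v* transpose S) \<bullet> w" by simp
  also have "\<dots> = u \<bullet> (S *v w)" using sym by (simp add: dot_lmul_matrix)
  finally show ?thesis .
qed

lemma quad_zero: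
  fixes a b :: real
  assumes "\<And>s. 0 \<le> 2 * s * a + s^2 * b" "b \<ge> 0"
  shows "a = 0"
proof -
  define s where "s = -a/(b+1)"
  have "0 \<le> 2 * s * a + s^2 * b" by (rule assms(1))
  hence "0 \<le> (2 * s * a + s^2 * b) * (b+1)^2" using assms(2) by simp
  also have "(2 * s * a + s^2 * b) * (b+1)^2 = 2 * a * (s * (b+1)) * (b+1) + (s * (b+1))^2 * b"
    by (simp add: power2_eq_square algebra_simps)
  also have "s * (b+1) = -a" using assms(2) by (simp add: s_def)
  also have "2 * a * (-a) * (b+1) + (-a)^2 * b = (-(a^2)) * (b + 2)"
    by (simp add: power2_eq_square algebra_simps)
  finally have "a^2 * (b+2) \<le> 0" by simp
  moreover have "b + 2 > 0" using assms(2) by simp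
  ultimately have "a^2 \<le> 0" by (simp add: mult_le_0_iff)
  thus ?thesis by simp
qed

lemma quadform_scale:
  fixes S :: "real^'n^'n"
  shows "(c *\<^sub>R v) \<bullet> (S *v (c *\<^sub>R v)) = c^2 * (v \<bullet> (S *v v))"
  by (simp add: matrix_vector_mult_scaleR power2_eq_square)

lemma lambda_min_props:
  fixes S :: "real^'n^'n"
  assumes sym: "transpose S = S" and pd: "\<And>v. v \<noteq> 0 \<Longrightarrow> v \<bullet> (S *v v) > 0"
  shows "lambda_min S > 0 \<and> (\<forall>v. lambda_min S * (norm v)^2 \<le> v \<bullet> (S *v v))"
proof -
  define Q where "Q v = v \<bullet> (S *v v)" for v :: "real^'n"
  have cont: "continuous_on (sphere 0 1) Q"
    unfolding Q_def
    by (intro continuous_intros linear_continuous_on linear_conv_bounded_linear[THEN iffD1] matrix_vector_mul_linear)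
  obtain u :: "real^'n" where u: "norm u = 1" using vector_choose_size[of 1] by auto
  have "sphere (0::real^'n) 1 \<noteq> {}" using u by auto
  then obtain v0 where v0: "v0 \<in> sphere 0 1" and v0min: "\<And>y. y \<in> sphere 0 1 \<Longrightarrow> Q v0 \<le> Q y"
    using continuous_attains_inf[OF compact_sphere _ cont] by blast
  define m where "m = Q v0"
  have nv0: "norm v0 = 1" using v0 by simp
  have "v0 \<noteq> 0" using nv0 by auto
  hence mpos: "m > 0" unfolding m_def Q_def using pd by blast
  have mle: "m * (norm v)^2 \<le> Q v" for v
  proof (cases "v = 0")
    case True then show ?thesis by (simp add: Q_def)
  next
    case False
    hence nv: "norm v > 0" by simp
    have "m \<le> Q ((1/norm v) *\<^sub>R v)" unfolding m_def using nv by (intro v0min) simp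
    also have "\<dots> = Q v / (norm v)^2" unfolding Q_def quadform_scale by (simp add: power_divide)
    finally show ?thesis using nv by (simp add: field_simps)
  qed
  have eig: "S *v v0 = m *\<^sub>R v0"
  proof -
    have mQ: "v0 \<bullet> (S *v v0) = m" by (simp add: m_def Q_def)
    define r where "r = S *v v0 - m *\<^sub>R v0"
    define b where "b = Q r - m * (norm r)^2"
    have b0: "b \<ge> 0" using mle[of r] by (simp add: b_def)
    have "0 \<le> 2 * s * (r \<bullet> r) + s^2 * b" for s
    proof -
      have "m * (norm (v0 + s *\<^sub>R r))^2 \<le> Q (v0 + s *\<^sub>R r)" by (rule mle)
      moreover have "(norm (v0 + s *\<^sub>R r))^2 = 1 + 2 * s * (v0 \<bullet> r) + s^2 * (norm r)^2"
      proof -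
        have vv: "v0 \<bullet> v0 = 1" by (metis nv0 power2_norm_eq_inner power_one)
        show ?thesis unfolding power2_norm_eq_inner
          by (simp add: inner_add inner_commute vv power2_eq_square algebra_simps)
      qed
      moreover have "Q (v0 + s *\<^sub>R r) = m + 2 * s * (r \<bullet> (S *v v0)) + s^2 * Q r"
        using sym_inner[OF sym, of r v0] mQ by (simp add: Q_def matrix_vector_right_distrib
            matrix_vector_mult_scaleR inner_add inner_commute power2_eq_square algebra_simps)
      moreover have "r \<bullet> (S *v v0) = r \<bullet> r + m * (v0 \<bullet> r)"
        by (simp add: r_def inner_diff inner_commute algebra_simps)
      ultimately show ?thesis by (simp add: b_def algebra_simps power2_eq_square)
    qed
    hence "r \<bullet> r = 0" using quad_zero b0 by blast
    thus ?thesis by (simp add: r_def)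
  qed
  define L where "L = {l. \<exists>v. v \<noteq> (0::real^'n) \<and> S *v v = l *\<^sub>R v}"
  have mL: "m \<in> L" unfolding L_def using eig nv0 by (intro CollectI exI[of _ v0]) auto
  have Lge: "m \<le> l" if "l \<in> L" for l
  proof -
    have "\<exists>v. v \<noteq> 0 \<and> S *v v = l *\<^sub>R v" using that unfolding L_def by (rule CollectD)
    then obtain v where v: "v \<noteq> 0" "S *v v = l *\<^sub>R v" by blast
    have "m * (norm v)^2 \<le> Q v" by (rule mle)
    also have "Q v = l * (norm v)^2" using v by (simp add: Q_def dot_square_norm)
    finally have le: "m * (norm v)^2 \<le> l * (norm v)^2" .
    have pos: "(norm v)^2 > 0" using v by (metis norm_eq_zero zero_less_power2)
    show ?thesis by (rule mult_right_le_imp_le[OF le pos])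
  qed
  define ev where "ev l = (SOME v. v \<noteq> 0 \<and> S *v v = l *\<^sub>R v)" for l
  have ev: "ev l \<noteq> 0 \<and> S *v ev l = l *\<^sub>R ev l" if "l \<in> L" for l
  proof -
    have "\<exists>v. v \<noteq> 0 \<and> S *v v = l *\<^sub>R v" using that unfolding L_def by (rule CollectD)
    then show ?thesis unfolding ev_def by (rule someI_ex)
  qed
  have inj: "inj_on ev L"
  proof (rule inj_onI)
    fix l l' assume ll: "l \<in> L" "l' \<in> L" "ev l = ev l'"
    have e1: "S *v ev l = l *\<^sub>R ev l" and nz: "ev l \<noteq> 0" using ev[OF ll(1)] by auto
    have e2: "S *v ev l' = l' *\<^sub>R ev l'" using ev[OF ll(2)] by auto
    have "l *\<^sub>R ev l = S *v ev l" using e1 by simp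
    also have "\<dots> = S *v ev l'" using ll(3) by simp
    also have "\<dots> = l' *\<^sub>R ev l'" by (rule e2)
    also have "\<dots> = l' *\<^sub>R ev l" using ll(3) by simp
    finally have "l *\<^sub>R ev l = l' *\<^sub>R ev l" .
    hence "(l - l') *\<^sub>R ev l = 0" by (simp add: scaleR_diff_left)
    thus "l = l'" using nz by simp
  qed
  have orth: "pairwise orthogonal (ev ` L)"
    unfolding pairwise_def
  proof (intro ballI impI)
    fix x y assume xy: "x \<in> ev ` L" "y \<in> ev ` L" "x \<noteq> y"
    then obtain l l' where ll: "l \<in> L" "l' \<in> L" "x = ev l" "y = ev l'" by blast
    hence ne: "l \<noteq> l'" using xy(3) by auto
    have e1: "S *v ev l = l *\<^sub>R ev l" using ev[OF ll(1)] by auto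
    have e2: "S *v ev l' = l' *\<^sub>R ev l'" using ev[OF ll(2)] by auto
    have "l * (ev l \<bullet> ev l') = (S *v ev l) \<bullet> ev l'" using e1 by simp
    also have "\<dots> = ev l \<bullet> (S *v ev l')" by (rule sym_inner[OF sym])
    also have "\<dots> = l' * (ev l \<bullet> ev l')" using e2 by simp
    finally have "(l - l') * (ev l \<bullet> ev l') = 0" by (simp add: algebra_simps)
    thus "orthogonal x y" using ne ll by (simp add: orthogonal_def)
  qed
  have "0 \<notin> ev ` L" using ev by auto
  hence "independent (ev ` L)" using orth pairwise_orthogonal_independent by blast
  hence "finite (ev ` L)" by (rule independent_imp_finite)
  hence finL: "finite L" using inj finite_imageD by blast
  have "lambda_min S = m"
    unfolding lambda_min_def L_def[symmetric] using finL mL Lge by (intro Min_eqI) auto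
  thus ?thesis using mpos mle unfolding Q_def by simp
qed

lemma pd_inverse:
  fixes S :: "real^'n^'n"
  assumes pd: "\<And>v. v \<noteq> 0 \<Longrightarrow> v \<bullet> (S *v v) > 0"
  shows "S ** matrix_inv S = mat 1 \<and> matrix_inv S ** S = mat 1"
proof -
  have "\<forall>x. S *v x = 0 \<longrightarrow> x = 0" using pd by (metis inner_zero_right less_irrefl)
  then obtain B where B: "B ** S = mat 1" using matrix_left_invertible_ker by blast
  hence "S ** B = mat 1" using matrix_left_right_inverse by blast
  hence "\<exists>B. S ** B = mat 1 \<and> B ** S = mat 1" using B by blast
  thus ?thesis unfolding matrix_inv_def by (rule someI_ex)
qed

lemma inv_bound:
  fixes S :: "real^'n^'n"
  assumes sym: "transpose S = S" and pd: "\<And>v. v \<noteq> 0 \<Longrightarrow> v \<bullet> (S *v v) > 0"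
  shows "norm (matrix_inv S *v w) \<le> norm w / lambda_min S"
proof -
  define m where "m = lambda_min S"
  have m: "m > 0" "\<And>v. m * (norm v)^2 \<le> v \<bullet> (S *v v)"
    using lambda_min_props[OF sym pd] unfolding m_def by auto
  define v where "v = matrix_inv S *v w"
  have Sv: "S *v v = w" using pd_inverse[OF pd] by (simp add: v_def matrix_vector_mul_assoc)
  have "m * (norm v)^2 \<le> v \<bullet> w" using m(2)[of v] Sv by simp
  also have "\<dots> \<le> norm v * norm w" by (rule Cauchy_Schwarz_ineq2[THEN order_trans[OF abs_ge_self]])
  finally have "m * (norm v)^2 \<le> norm v * norm w" .
  hence "m * norm v \<le> norm w"
    by (cases "norm v = 0") (auto simp: power2_eq_square mult.assoc)
  thus ?thesis using m(1) by (simp add: v_def m_def field_simps)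
qed


theorem theorem4:
  fixes M :: "'a measure"
    and X :: "'a \<Rightarrow> ('d::finite \<Rightarrow> nat)"
    and Xs :: "nat \<Rightarrow> 'a \<Rightarrow> ('d \<Rightarrow> nat)"
    and G :: "('d \<Rightarrow> nat) \<Rightarrow> real"
    and n :: nat and x :: "'d \<Rightarrow> nat" and \<epsilon> :: real
  assumes "prob_space M"
    and X_rv: "X \<in> measurable M (count_space bin01)"
    and full_support: "\<And>y. y \<in> bin01 \<Longrightarrow> measure M {\<omega> \<in> space M. X \<omega> = y} > 0"
    and Xs_rv: "\<And>i. i \<in> {1..n} \<Longrightarrow> Xs i \<in> measurable M (count_space bin01)"
    and Xs_indep: "prob_space.indep_vars M (\<lambda>_. count_space bin01) Xs {1..n}"
    and Xs_ident: "\<And>i. i \<in> {1..n} \<Longrightarrow>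
                     distr M (count_space bin01) (Xs i) = distr M (count_space bin01) X"
    and Gamma_sym: "transpose (Gamma M X) = Gamma M X"
    and Gamma_pd: "\<And>v. v \<noteq> 0 \<Longrightarrow> v \<bullet> (Gamma M X *v v) > 0"
    and n_pos: "n \<ge> 1"
    and x_in: "x \<in> bin01"
    and eps_nonneg: "0 \<le> \<epsilon>"
    and eps_le: "\<epsilon> \<le> gsupnorm M X G * norm (evec M X x) / lambda_min (Gamma M X)"
  shows "measure M {\<omega> \<in> space M. \<bar>Ghat M X G n Xs x \<omega> - G x\<bar> > \<epsilon>}
           \<le> exp (- (real n / 8) *
                   (\<epsilon> * lambda_min (Gamma M X) / (gsupnorm M X G * norm (evec M X x)))\<^sup>2 + 1 / 4)"
proof -
  note P = assms(1)
  interpret prob_space M by (rule P)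
  define q where "q a = measure M {\<omega> \<in> space M. X \<omega> = a}" for a
  define \<Gamma> where "\<Gamma> = Gamma M X"
  define c where "c = gsupnorm M X G"
  define ne where "ne = norm (evec M X x)"
  define m where "m = lambda_min \<Gamma>"
  define \<mu> where "\<mu> = muvec M X G"
  define g where "g = gvec M X G"
  have q0: "q a \<ge> 0" for a by (simp add: q_def)
  have q1: "sum q bin01 = 1"
  proof -
    have "integral\<^sup>L M (\<lambda>\<omega>. (\<lambda>_. 1::real) (X \<omega>)) = (\<Sum>a\<in>bin01. q a *\<^sub>R 1)"
      unfolding q_def by (rule exp_trans[OF P X_rv])
    thus ?thesis using prob_space by simp
  qed
  have Gam: "\<Gamma> $ A $ B = (\<Sum>a\<in>bin01. q a * (eA M X A a * eA M X B a))" for A B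
  proof -
    have "\<Gamma> $ A $ B = integral\<^sup>L M (\<lambda>\<omega>. (\<lambda>a. eA M X A a * eA M X B a) (X \<omega>))"
      by (simp add: \<Gamma>_def Gamma_def)
    also have "\<dots> = (\<Sum>a\<in>bin01. q a *\<^sub>R (eA M X A a * eA M X B a))"
      unfolding q_def by (rule exp_trans[OF P X_rv])
    finally show ?thesis by simp
  qed
  have mu: "\<mu> = (\<Sum>a\<in>bin01. q a *\<^sub>R g a)"
    unfolding \<mu>_def muvec_def q_def g_def by (rule exp_trans[OF P X_rv])
  have quad: "\<beta> \<bullet> (\<Gamma> *v \<beta>) = (\<Sum>a\<in>bin01. q a * (\<Sum>A\<in>UNIV. eA M X A a * \<beta> $ A)^2)" for \<beta>
  proof -
    have "\<beta> \<bullet> (\<Gamma> *v \<beta>) = (\<Sum>A\<in>UNIV. \<Sum>B\<in>UNIV. \<Sum>a\<in>bin01. q a * ((eA M X A a * \<beta> $ A) * (eA M X B a * \<beta> $ B)))"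
      by (simp add: inner_vec_def matrix_vector_mult_def Gam sum_distrib_left sum_distrib_right mult_ac)
    also have "\<dots> = (\<Sum>a\<in>bin01. \<Sum>A\<in>UNIV. \<Sum>B\<in>UNIV. q a * ((eA M X A a * \<beta> $ A) * (eA M X B a * \<beta> $ B)))"
      by (simp add: sum.swap[of _ bin01])
    also have "\<dots> = (\<Sum>a\<in>bin01. q a * (\<Sum>A\<in>UNIV. eA M X A a * \<beta> $ A)^2)"
      unfolding power2_eq_square sum_product by (simp only: sum_distrib_left)
    finally show ?thesis .
  qed
  define ind where "ind S = (\<lambda>j. if j \<in> S then 1 else 0 :: nat)" for S :: "'d set"
  have ind_bin: "a = ind {j. a j = 1}" if "a \<in> bin01" for a
    using that by (auto simp: ind_def bin01_def fun_eq_iff)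
  have ind_in: "ind S \<in> bin01" for S by (simp add: ind_def bin01_def)
  define K :: "real^('d set)^('d set)" where "K = (\<chi> S A. eA M X A (ind S))"
  have Kker: "\<forall>\<beta>. K *v \<beta> = 0 \<longrightarrow> \<beta> = 0"
  proof (intro allI impI)
    fix \<beta> :: "real^('d set)" assume K0: "K *v \<beta> = 0"
    have z: "(\<Sum>A\<in>UNIV. eA M X A a * \<beta> $ A) = 0" if a: "a \<in> bin01" for a
    proof -
      have "(K *v \<beta>) $ {j. a j = 1} = 0" using K0 by simp
      thus ?thesis using ind_bin[OF a] by (simp add: K_def matrix_vector_mult_def)
    qed
    have "\<beta> \<bullet> (\<Gamma> *v \<beta>) = 0" unfolding quad using z by simp
    thus "\<beta> = 0" using Gamma_pd[of \<beta>] unfolding \<Gamma>_def by (metis less_irrefl)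
  qed
  obtain KB where "KB ** K = mat 1" using Kker matrix_left_invertible_ker by blast
  hence KB: "K ** KB = mat 1" using matrix_left_right_inverse by blast
  define \<beta> where "\<beta> = KB *v (\<chi> S. G (ind S))"
  have span: "(\<Sum>A\<in>UNIV. eA M X A a * \<beta> $ A) = G a" if a: "a \<in> bin01" for a
  proof -
    have "K *v \<beta> = (\<chi> S. G (ind S))" unfolding \<beta>_def by (simp add: matrix_vector_mul_assoc KB)
    hence "(K *v \<beta>) $ {j. a j = 1} = G (ind {j. a j = 1})" by simp
    thus ?thesis using ind_bin[OF a] by (simp add: K_def matrix_vector_mult_def)
  qed
  have mu_eq: "\<mu> = \<Gamma> *v \<beta>"
  proof (rule vec_eq_iff[THEN iffD2], rule allI)
    fix A
    have "\<mu> $ A = (\<Sum>a\<in>bin01. q a * (eA M X A a * G a))"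
      by (simp add: mu g_def gvec_def)
    also have "\<dots> = (\<Sum>a\<in>bin01. q a * (eA M X A a * (\<Sum>B\<in>UNIV. eA M X B a * \<beta> $ B)))"
      using span by (intro sum.cong refl) simp
    also have "\<dots> = (\<Sum>B\<in>UNIV. (\<Sum>a\<in>bin01. q a * (eA M X A a * eA M X B a)) * \<beta> $ B)"
      by (simp add: sum_distrib_left sum_distrib_right sum.swap[of _ bin01] mult_ac)
    also have "\<dots> = (\<Gamma> *v \<beta>) $ A"
      by (simp add: matrix_vector_mult_def Gam)
    finally show "\<mu> $ A = (\<Gamma> *v \<beta>) $ A" .
  qed
  have inv: "\<Gamma> ** matrix_inv \<Gamma> = mat 1 \<and> matrix_inv \<Gamma> ** \<Gamma> = mat 1"
    unfolding \<Gamma>_def by (rule pd_inverse[OF Gamma_pd])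
  have beta_eq: "matrix_inv \<Gamma> *v \<mu> = \<beta>"
    using inv by (simp add: mu_eq matrix_vector_mul_assoc)
  have Gx: "G x = (matrix_inv \<Gamma> *v \<mu>) \<bullet> evec M X x"
    using span[OF x_in] by (simp add: beta_eq inner_vec_def evec_def mult.commute)
  have diff: "Ghat M X G n Xs x \<omega> - G x =
      (matrix_inv \<Gamma> *v ((1 / real n) *\<^sub>R (\<Sum>i = 1..n. g (Xs i \<omega>)) - \<mu>)) \<bullet> evec M X x" for \<omega>
    unfolding Ghat_def Gx \<Gamma>_def g_def by (simp add: matrix_vector_mult_diff_distrib inner_diff_left)
  have mpos: "m > 0" and invb: "\<And>w. norm (matrix_inv \<Gamma> *v w) \<le> norm w / m"
    using lambda_min_props[OF Gamma_sym Gamma_pd] inv_bound[OF Gamma_sym Gamma_pd]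
    unfolding m_def \<Gamma>_def by auto
  have cbd: "norm (g a - \<mu>) \<le> c" if "a \<in> bin01" for a
    unfolding c_def gsupnorm_def g_def[symmetric] \<mu>_def[symmetric]
    by (rule cSUP_upper[OF that bdd_above_finite]) (simp add: finite_bin01)
  have c0: "c \<ge> 0" using cbd[OF ind_in] norm_ge_zero order_trans by blast
  show ?thesis
  proof (cases "c * ne = 0")
    case True
    have "measure M {\<omega> \<in> space M. \<bar>Ghat M X G n Xs x \<omega> - G x\<bar> > \<epsilon>} \<le> 1" by (rule prob_le_1)
    also have "1 \<le> exp (1/4::real)" by simp
    finally have pr: "measure M {\<omega> \<in> space M. \<bar>Ghat M X G n Xs x \<omega> - G x\<bar> > \<epsilon>} \<le> exp (1/4)" .
    have z: "gsupnorm M X G * norm (evec M X x) = 0" using True by (simp add: c_def ne_def)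
    show ?thesis unfolding z using pr by simp
  next
    case False
    hence cpos: "c > 0" and nepos: "ne > 0" using c0 by (auto simp: ne_def)
    define Z where "Z a = (1 / c) *\<^sub>R (g a - \<mu>)" for a
    define t where "t = \<epsilon> * m / (c * ne)"
    have t0: "t \<ge> 0" using eps_nonneg mpos cpos nepos by (simp add: t_def)
    define E where "E = {y \<in> PiE {1..n} (\<lambda>_. bin01). norm (Tsum Z n y) > n * t}"
    have sub: "{\<omega> \<in> space M. \<bar>Ghat M X G n Xs x \<omega> - G x\<bar> > \<epsilon>}
        \<subseteq> {\<omega> \<in> space M. (\<lambda>i\<in>{1..n}. Xs i \<omega>) \<in> E}"
    proof safe
      fix \<omega> assume w: "\<omega> \<in> space M" and gt: "\<bar>Ghat M X G n Xs x \<omega> - G x\<bar> > \<epsilon>"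
      have inP: "(\<lambda>i\<in>{1..n}. Xs i \<omega>) \<in> PiE {1..n} (\<lambda>_. bin01)"
        using X_in_bin01[OF Xs_rv w] by auto
      have Ts: "Tsum Z n (\<lambda>i\<in>{1..n}. Xs i \<omega>) = (\<Sum>i = 1..n. Z (Xs i \<omega>))"
        unfolding Tsum_def by (intro sum.cong) auto
      define D where "D = (1 / real n) *\<^sub>R (\<Sum>i = 1..n. g (Xs i \<omega>)) - \<mu>"
      have D: "D = (c / real n) *\<^sub>R (\<Sum>i = 1..n. Z (Xs i \<omega>))"
      proof -
        have "(\<Sum>i = 1..n. Z (Xs i \<omega>)) = (1 / c) *\<^sub>R ((\<Sum>i = 1..n. g (Xs i \<omega>)) - real n *\<^sub>R \<mu>)"
        proof -
          have sc: "(\<Sum>i = 1..n. \<mu>) = real n *\<^sub>R \<mu>" by (simp only: sum_constant_scaleR card_atLeastAtMost) simp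
          have "(\<Sum>i = 1..n. Z (Xs i \<omega>)) = (1 / c) *\<^sub>R (\<Sum>i = 1..n. g (Xs i \<omega>) - \<mu>)"
            by (simp add: Z_def scaleR_sum_right)
          also have "\<dots> = (1 / c) *\<^sub>R ((\<Sum>i = 1..n. g (Xs i \<omega>)) - (\<Sum>i = 1..n. \<mu>))"
            by (simp only: sum_subtractf)
          finally show ?thesis unfolding sc .
        qed
        hence "(c / real n) *\<^sub>R (\<Sum>i = 1..n. Z (Xs i \<omega>))
            = ((c / real n) * (1 / c)) *\<^sub>R ((\<Sum>i = 1..n. g (Xs i \<omega>)) - real n *\<^sub>R \<mu>)" by simp
        also have "(c / real n) * (1 / c) = 1 / real n" using cpos by simp
        also have "(1 / real n) *\<^sub>R ((\<Sum>i = 1..n. g (Xs i \<omega>)) - real n *\<^sub>R \<mu>)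
            = (1 / real n) *\<^sub>R (\<Sum>i = 1..n. g (Xs i \<omega>)) - \<mu>"
          using n_pos by (simp add: scaleR_diff_right)
        finally show ?thesis by (simp add: D_def)
      qed
      have "\<epsilon> < \<bar>(matrix_inv \<Gamma> *v D) \<bullet> evec M X x\<bar>" using gt diff[of \<omega>] by (simp add: D_def)
      also have "\<dots> \<le> norm (matrix_inv \<Gamma> *v D) * ne" unfolding ne_def by (rule Cauchy_Schwarz_ineq2)
      also have "\<dots> \<le> norm D / m * ne" by (intro mult_right_mono invb) (simp add: ne_def)
      also have "\<dots> = (c / real n) * norm (\<Sum>i = 1..n. Z (Xs i \<omega>)) / m * ne"
        using cpos by (simp add: D)
      finally have "\<epsilon> < (c / real n) * norm (\<Sum>i = 1..n. Z (Xs i \<omega>)) / m * ne" .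
      hence "n * t < norm (\<Sum>i = 1..n. Z (Xs i \<omega>))"
        using cpos nepos mpos n_pos by (simp add: t_def field_simps)
      thus "(\<lambda>i\<in>{1..n}. Xs i \<omega>) \<in> E" unfolding E_def using inP Ts by simp
    qed
    have Esub: "E \<subseteq> PiE {1..n} (\<lambda>_. bin01)" unfolding E_def by auto
    note PT = prob_trans[OF P X_rv Xs_rv Xs_indep Xs_ident n_pos Esub]
    have "measure M {\<omega> \<in> space M. \<bar>Ghat M X G n Xs x \<omega> - G x\<bar> > \<epsilon>}
        \<le> measure M {\<omega> \<in> space M. (\<lambda>i\<in>{1..n}. Xs i \<omega>) \<in> E}"
      using PT sub by (intro finite_measure_mono) auto
    also have "\<dots> = (\<Sum>y\<in>E. \<Prod>i\<in>{1..n}. q (y i))" using PT unfolding q_def by simp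
    also have "\<dots> \<le> exp (1/6 - n * t^2 / 8)"
      unfolding E_def
    proof (rule tail_fin[OF finite_bin01 q0 q1 _ _ n_pos t0])
      have "(\<Sum>a\<in>bin01. q a *\<^sub>R Z a) = (\<Sum>a\<in>bin01. (1 / c) *\<^sub>R (q a *\<^sub>R g a - q a *\<^sub>R \<mu>))"
        by (intro sum.cong refl) (simp add: Z_def scaleR_diff_right)
      also have "\<dots> = (1 / c) *\<^sub>R ((\<Sum>a\<in>bin01. q a *\<^sub>R g a) - (\<Sum>a\<in>bin01. q a *\<^sub>R \<mu>))"
        by (simp only: scaleR_sum_right[symmetric] sum_subtractf)
      also have "(\<Sum>a\<in>bin01. q a *\<^sub>R \<mu>) = (\<Sum>a\<in>bin01. q a) *\<^sub>R \<mu>"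
        by (rule scaleR_sum_left[symmetric])
      finally show "(\<Sum>a\<in>bin01. q a *\<^sub>R Z a) = 0" using q1 mu by simp
      show "norm (Z a) \<le> 1" if "a \<in> bin01" for a
      proof -
        have "norm (Z a) = (1 / c) * norm (g a - \<mu>)" unfolding Z_def norm_scaleR using cpos by simp
        also have "\<dots> \<le> (1 / c) * c" using cpos by (intro mult_left_mono cbd[OF that]) simp
        also have "\<dots> = 1" using cpos by simp
        finally show ?thesis .
      qed
    qed
    also have "\<dots> \<le> exp (- (real n / 8) * t^2 + 1 / 4)" by simp
    finally show ?thesis by (simp add: t_def m_def c_def ne_def \<Gamma>_def)
  qed
qed



end
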